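(* Let $\Pi$ be a protocol on a memory set $M$ with $|M|=m$, having $n>2$ absorbing memory states, and let $\sigma\in\mathrm{br}(\Pi)$. Then there exists a protocol $\Pi'$ on some $M'\subset M$ with $|M'|=m-1$, having $n-1$ absorbing memory states, such that $U^R(\Pi)=U^R(\Pi')$ and the restriction of $\sigma$ to $M'\times\Theta$ is a best response to $\Pi'$.
   Context: Setting. The state of nature is $\theta\in\Theta=\{H,L\}$ with prior $\Pr(\theta=H)=p\in(0,1)$. A sender privately observes $\theta$; a receiver does not. $S$ is a finite signal set; conditional on $\theta$, signals are i.i.d. with distribution $\pi_\theta$ on $S$, where $\pi_\theta(s)>0$ for all $s\in S,\theta\in\Theta$, and $\pi_H\neq\pi_L$. The receiver has a finite set of memory states $M$ and chooses a protocol $\Pi=(f,g,a)$: a transition function $f:M\times S\to\Delta(M)$ ($f(i,s)(j)$ is the probability of moving from memory state $i$ to $j$ after signal $s$), an initial distribution $g\in\Delta(M)$ of $m_0$, and an action rule $a:M\to[0,1]$ (probability of action $H$ if the game ends in that memory state). A sender strategy is $\sigma:M\times\Theta\to[0,1]$, the probability of stopping in the current memory state given $\theta$. Timing: $m_0\sim g$; in each period $t=0,1,\dots$, with current memory state $m_t$, the game ends if $m_t$ is absorbing ($f(m_t,s)(m_t)=1$ for all $s$); otherwise the sender stops with probability $\sigma(m_t,\theta)$, ending the game; if not stopped, a signal $s_t\sim\pi_\theta$ is generated and $m_{t+1}\sim f(m_t,s_t)$. When the game ends in state $m_t$ the receiver takes action $H$ with probability $a(m_t)$ and $L$ otherwise.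 The receiver's payoff is $1$ if the action equals $\theta$ and $0$ otherwise; the sender's payoff is $1$ if the action is $H$ and $0$ otherwise; there is no discounting; if the game never ends both get $0$. $U^S(\Pi,\sigma),U^R(\Pi,\sigma)$ denote expected payoffs, $\mathrm{br}(\Pi)=\arg\sup_\sigma U^S(\Pi,\sigma)$ is the set of sender best responses, and $U^R(\Pi):=U^R(\Pi,\sigma)$ for $\sigma\in\mathrm{br}(\Pi)$. Since $\pi_\theta$ has full support, which transitions $i\to j$ have positive probability does not depend on $\theta$; the terms absorbing, transient, recurrent communicating class applied to $\Pi$ refer to the Markov chain on $M$ induced by $f$ with signals drawn from $\pi_\theta$ (sender never stopping), and mean the same for both $\theta$. *)

theory Defs
  imports "HOL-Analysis.Analysis"
begin

datatype theta = H | L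

definition valid_signals :: "'s set \<Rightarrow> (theta \<Rightarrow> 's \<Rightarrow> real) \<Rightarrow> bool" where
  "valid_signals S \<pi> \<longleftrightarrow> finite S \<and>
     (\<forall>\<theta>. \<forall>s\<in>S. \<pi> \<theta> s > 0) \<and> (\<forall>\<theta>. (\<Sum>s\<in>S. \<pi> \<theta> s) = 1) \<and>
     (\<exists>s\<in>S. \<pi> H s \<noteq> \<pi> L s)"

text \<open>A protocol (f, g, a): trans i s j = f(i,s)(j), init = g, act = a.\<close>
record ('m, 's) protocol =
  trans :: "'m \<Rightarrow> 's \<Rightarrow> 'm \<Rightarrow> real"
  init  :: "'m \<Rightarrow> real"
  act   :: "'m \<Rightarrow> real"

definition valid_protocol :: "'m set \<Rightarrow> 's set \<Rightarrow> ('m, 's) protocol \<Rightarrow> bool" where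
  "valid_protocol M S P \<longleftrightarrow> finite M \<and>
     (\<forall>i\<in>M. \<forall>s\<in>S. (\<forall>j\<in>M. trans P i s j \<ge> 0) \<and> (\<Sum>j\<in>M. trans P i s j) = 1) \<and>
     (\<forall>j\<in>M. init P j \<ge> 0) \<and> (\<Sum>j\<in>M. init P j) = 1 \<and>
     (\<forall>i\<in>M. 0 \<le> act P i \<and> act P i \<le> 1)"

definition absorbing :: "'s set \<Rightarrow> ('m, 's) protocol \<Rightarrow> 'm \<Rightarrow> bool" where
  "absorbing S P i \<longleftrightarrow> (\<forall>s\<in>S. trans P i s i = 1)"

definition absorbing_states :: "'m set \<Rightarrow> 's set \<Rightarrow> ('m, 's) protocol \<Rightarrow> 'm set" where
  "absorbing_states M S P = {i\<in>M. absorbing S P i}"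

text \<open>Sender strategy sigma i theta = probability of stopping in memory state i given theta.\<close>
definition strategy :: "'m set \<Rightarrow> ('m \<Rightarrow> theta \<Rightarrow> real) \<Rightarrow> bool" where
  "strategy M \<sigma> \<longleftrightarrow> (\<forall>i\<in>M. \<forall>\<theta>. 0 \<le> \<sigma> i \<theta> \<and> \<sigma> i \<theta> \<le> 1)"

text \<open>reach ... t j: probability (given theta) that the game has not ended before
  period t and the memory state at period t is j.\<close>
primrec reach :: "'m set \<Rightarrow> 's set \<Rightarrow> (theta \<Rightarrow> 's \<Rightarrow> real) \<Rightarrow> ('m, 's) protocol \<Rightarrow>
    ('m \<Rightarrow> theta \<Rightarrow> real) \<Rightarrow> theta \<Rightarrow> nat \<Rightarrow> 'm \<Rightarrow> real" where
  "reach M S \<pi> P \<sigma> \<theta> 0 j = init P j"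
| "reach M S \<pi> P \<sigma> \<theta> (Suc t) j =
     (\<Sum>i\<in>M. if absorbing S P i then 0
             else reach M S \<pi> P \<sigma> \<theta> t i * (1 - \<sigma> i \<theta>) * (\<Sum>s\<in>S. \<pi> \<theta> s * trans P i s j))"

definition end_prob :: "'m set \<Rightarrow> 's set \<Rightarrow> (theta \<Rightarrow> 's \<Rightarrow> real) \<Rightarrow> ('m, 's) protocol \<Rightarrow>
    ('m \<Rightarrow> theta \<Rightarrow> real) \<Rightarrow> theta \<Rightarrow> 'm \<Rightarrow> real" where
  "end_prob M S \<pi> P \<sigma> \<theta> i =
     (\<Sum>t. reach M S \<pi> P \<sigma> \<theta> t i * (if absorbing S P i then 1 else \<sigma> i \<theta>))"

text \<open>Sender's expected payoff U^S(Pi, sigma): probability of action H (prior p on H).\<close>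
definition US :: "'m set \<Rightarrow> 's set \<Rightarrow> (theta \<Rightarrow> 's \<Rightarrow> real) \<Rightarrow> real \<Rightarrow> ('m, 's) protocol \<Rightarrow>
    ('m \<Rightarrow> theta \<Rightarrow> real) \<Rightarrow> real" where
  "US M S \<pi> p P \<sigma> =
     p * (\<Sum>i\<in>M. end_prob M S \<pi> P \<sigma> H i * act P i) +
     (1 - p) * (\<Sum>i\<in>M. end_prob M S \<pi> P \<sigma> L i * act P i)"

text \<open>Receiver's expected payoff U^R(Pi, sigma): probability the action matches theta.\<close>
definition UR :: "'m set \<Rightarrow> 's set \<Rightarrow> (theta \<Rightarrow> 's \<Rightarrow> real) \<Rightarrow> real \<Rightarrow> ('m, 's) protocol \<Rightarrow>
    ('m \<Rightarrow> theta \<Rightarrow> real) \<Rightarrow> real" where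
  "UR M S \<pi> p P \<sigma> =
     p * (\<Sum>i\<in>M. end_prob M S \<pi> P \<sigma> H i * act P i) +
     (1 - p) * (\<Sum>i\<in>M. end_prob M S \<pi> P \<sigma> L i * (1 - act P i))"

definition best_response :: "'m set \<Rightarrow> 's set \<Rightarrow> (theta \<Rightarrow> 's \<Rightarrow> real) \<Rightarrow> real \<Rightarrow>
    ('m, 's) protocol \<Rightarrow> ('m \<Rightarrow> theta \<Rightarrow> real) \<Rightarrow> bool" where
  "best_response M S \<pi> p P \<sigma> \<longleftrightarrow> strategy M \<sigma> \<and>
     (\<forall>\<sigma>'. strategy M \<sigma>' \<longrightarrow> US M S \<pi> p P \<sigma>' \<le> US M S \<pi> p P \<sigma>)"

end

theory Submission imports Defs begin

lemma reach_cong: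
  assumes "\<And>i. i \<in> M \<Longrightarrow> \<not> absorbing S P i \<Longrightarrow> \<sigma>1 i \<theta> = \<sigma>2 i \<theta>"
  shows "reach M S \<pi> P \<sigma>1 \<theta> t j = reach M S \<pi> P \<sigma>2 \<theta> t j"
proof (induction t arbitrary: j)
  case 0 then show ?case by simp
next
  case (Suc t) then show ?case
    by (auto intro!: sum.cong simp: assms)
qed

lemma end_prob_cong:
  assumes "\<And>i. i \<in> M \<Longrightarrow> \<not> absorbing S P i \<Longrightarrow> \<sigma>1 i \<theta> = \<sigma>2 i \<theta>" "j \<in> M"
  shows "end_prob M S \<pi> P \<sigma>1 \<theta> j = end_prob M S \<pi> P \<sigma>2 \<theta> j"
  unfolding end_prob_def using reach_cong[of M S P \<sigma>1 \<theta> \<sigma>2, OF assms(1)] assms by auto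

lemma US_cong:
  assumes "\<And>i \<theta>. i \<in> M \<Longrightarrow> \<not> absorbing S P i \<Longrightarrow> \<sigma>1 i \<theta> = \<sigma>2 i \<theta>"
  shows "US M S \<pi> p P \<sigma>1 = US M S \<pi> p P \<sigma>2"
  unfolding US_def using end_prob_cong[of M S P \<sigma>1 _ \<sigma>2] assms
  by (metis (no_types, lifting) sum.cong)

lemma reach_nonneg:
  assumes vs: "valid_signals S \<pi>" and vp: "valid_protocol M S P"
    and sg: "\<And>i. i \<in> M \<Longrightarrow> \<not> absorbing S P i \<Longrightarrow> 0 \<le> \<sigma> i \<theta> \<and> \<sigma> i \<theta> \<le> 1"
    and j: "j \<in> M"
  shows "0 \<le> reach M S \<pi> P \<sigma> \<theta> t j"
  using j
proof (induction t arbitrary: j)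
  case 0 then show ?case using vp by (simp add: valid_protocol_def)
next
  case (Suc t)
  have "0 \<le> (\<Sum>s\<in>S. \<pi> \<theta> s * trans P i s j)" if "i \<in> M" for i
  proof (rule sum_nonneg)
    fix s assume "s \<in> S"
    then show "0 \<le> \<pi> \<theta> s * trans P i s j"
    proof -
      have "0 < \<pi> \<theta> s" using vs \<open>s \<in> S\<close> by (simp add: valid_signals_def)
      moreover have "0 \<le> trans P i s j" using vp \<open>s \<in> S\<close> that Suc.prems by (simp add: valid_protocol_def)
      ultimately show ?thesis by simp
    qed
  qed
  then show ?case using Suc sg
    by (auto intro!: sum_nonneg mult_nonneg_nonneg)
qed

definition wt where "wt S P \<sigma> \<theta> i = (if absorbing S P i then 1 else \<sigma> i \<theta>)"

lemma mass_step:
  assumes vs: "valid_signals S \<pi>" and vp: "valid_protocol M S P"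
  shows "(\<Sum>j\<in>M. reach M S \<pi> P \<sigma> \<theta> t j) =
     (\<Sum>j\<in>M. reach M S \<pi> P \<sigma> \<theta> (Suc t) j) + (\<Sum>i\<in>M. reach M S \<pi> P \<sigma> \<theta> t i * wt S P \<sigma> \<theta> i)"
proof -
  have fin: "finite M" "finite S" using vs vp by (auto simp: valid_signals_def valid_protocol_def)
  have one: "(\<Sum>j\<in>M. \<Sum>s\<in>S. \<pi> \<theta> s * trans P i s j) = 1" if "i \<in> M" for i
  proof -
    have "(\<Sum>j\<in>M. \<Sum>s\<in>S. \<pi> \<theta> s * trans P i s j) = (\<Sum>s\<in>S. \<pi> \<theta> s * (\<Sum>j\<in>M. trans P i s j))"
      by (subst sum.swap) (simp add: sum_distrib_left)
    also have "\<dots> = (\<Sum>s\<in>S. \<pi> \<theta> s)" using vp that by (simp add: valid_protocol_def)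
    also have "\<dots> = 1" using vs by (simp add: valid_signals_def)
    finally show ?thesis .
  qed
  have "(\<Sum>j\<in>M. reach M S \<pi> P \<sigma> \<theta> (Suc t) j) =
      (\<Sum>i\<in>M. \<Sum>j\<in>M. if absorbing S P i then 0
             else reach M S \<pi> P \<sigma> \<theta> t i * (1 - \<sigma> i \<theta>) * (\<Sum>s\<in>S. \<pi> \<theta> s * trans P i s j))"
    by (simp only: reach.simps) (rule sum.swap)
  also have "\<dots> = (\<Sum>i\<in>M. if absorbing S P i then 0 else reach M S \<pi> P \<sigma> \<theta> t i * (1 - \<sigma> i \<theta>))"
  proof (rule sum.cong)
    fix i assume "i \<in> M"
    show "(\<Sum>j\<in>M. if absorbing S P i then 0
             else reach M S \<pi> P \<sigma> \<theta> t i * (1 - \<sigma> i \<theta>) * (\<Sum>s\<in>S. \<pi> \<theta> s * trans P i s j))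
       = (if absorbing S P i then 0 else reach M S \<pi> P \<sigma> \<theta> t i * (1 - \<sigma> i \<theta>))"
      using one[OF \<open>i \<in> M\<close>] by (simp add: sum_distrib_left[symmetric])
  qed simp
  finally have e: "(\<Sum>j\<in>M. reach M S \<pi> P \<sigma> \<theta> (Suc t) j) = \<dots>" .
  show ?thesis unfolding e sum.distrib[symmetric]
    by (rule sum.cong) (simp_all add: wt_def algebra_simps)
qed

lemma ends_bound:
  assumes vs: "valid_signals S \<pi>" and vp: "valid_protocol M S P"
    and sg: "\<And>i. i \<in> M \<Longrightarrow> \<not> absorbing S P i \<Longrightarrow> 0 \<le> \<sigma> i \<theta> \<and> \<sigma> i \<theta> \<le> 1"
  shows "(\<Sum>t<N. \<Sum>i\<in>M. reach M S \<pi> P \<sigma> \<theta> t i * wt S P \<sigma> \<theta> i) \<le> 1"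
proof -
  have "(\<Sum>t<N. \<Sum>i\<in>M. reach M S \<pi> P \<sigma> \<theta> t i * wt S P \<sigma> \<theta> i) =
     (\<Sum>j\<in>M. reach M S \<pi> P \<sigma> \<theta> 0 j) - (\<Sum>j\<in>M. reach M S \<pi> P \<sigma> \<theta> N j)"
  proof (induction N)
    case (Suc N)
    show ?case using Suc mass_step[OF vs vp, of \<sigma> \<theta> N] by simp
  qed simp
  moreover have "(\<Sum>j\<in>M. reach M S \<pi> P \<sigma> \<theta> 0 j) = 1" using vp by (simp add: valid_protocol_def)
  moreover have "0 \<le> (\<Sum>j\<in>M. reach M S \<pi> P \<sigma> \<theta> N j)"
    using reach_nonneg[OF vs vp, of \<sigma> \<theta>] sg by (simp add: sum_nonneg)
  ultimately show ?thesis by linarith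
qed

lemma reach_summable:
  assumes vs: "valid_signals S \<pi>" and vp: "valid_protocol M S P"
    and sg: "\<And>i. i \<in> M \<Longrightarrow> \<not> absorbing S P i \<Longrightarrow> 0 \<le> \<sigma> i \<theta> \<and> \<sigma> i \<theta> \<le> 1"
    and j: "j \<in> M" and ab: "absorbing S P j"
  shows "summable (\<lambda>t. reach M S \<pi> P \<sigma> \<theta> t j)"
proof (rule summableI_nonneg_bounded)
  show "0 \<le> reach M S \<pi> P \<sigma> \<theta> t j" for t using reach_nonneg[OF vs vp, of \<sigma> \<theta>] sg j by blast
  fix N
  have fin: "finite M" using vp by (simp add: valid_protocol_def)
  have nn: "0 \<le> reach M S \<pi> P \<sigma> \<theta> t i * wt S P \<sigma> \<theta> i" if "i \<in> M" for t i
    using reach_nonneg[OF vs vp, of \<sigma> \<theta>] sg that by (auto simp: wt_def)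
  have "(\<Sum>t<N. reach M S \<pi> P \<sigma> \<theta> t j) \<le> (\<Sum>t<N. \<Sum>i\<in>M. reach M S \<pi> P \<sigma> \<theta> t i * wt S P \<sigma> \<theta> i)"
  proof (rule sum_mono)
    fix t
    have "reach M S \<pi> P \<sigma> \<theta> t j = reach M S \<pi> P \<sigma> \<theta> t j * wt S P \<sigma> \<theta> j" using ab by (simp add: wt_def)
    also have "\<dots> \<le> (\<Sum>i\<in>M. reach M S \<pi> P \<sigma> \<theta> t i * wt S P \<sigma> \<theta> i)"
      by (rule member_le_sum[OF j _ fin]) (use nn in auto)
    finally show "reach M S \<pi> P \<sigma> \<theta> t j \<le> \<dots>" .
  qed
  also have "\<dots> \<le> 1" using ends_bound[OF vs vp, of \<sigma> \<theta> N] sg by blast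
  finally show "(\<Sum>t<N. reach M S \<pi> P \<sigma> \<theta> t j) \<le> 1" .
qed


definition cc :: "'m \<Rightarrow> 'm \<Rightarrow> real \<Rightarrow> 'm \<Rightarrow> real" where
  "cc j1 j2 lam j = (if j = j1 then lam else if j = j2 then 1 - lam else 0)"

definition mergeP :: "('m, 's) protocol \<Rightarrow> 'm \<Rightarrow> 'm \<Rightarrow> 'm \<Rightarrow> real \<Rightarrow> ('m, 's) protocol" where
  "mergeP P k j1 j2 lam = \<lparr>trans = (\<lambda>i s j. trans P i s j + cc j1 j2 lam j * trans P i s k),
      init = (\<lambda>j. init P j + cc j1 j2 lam j * init P k), act = act P\<rparr>"

lemma absorbing_out_zero:
  assumes vp: "valid_protocol M S P" and i: "i \<in> M" and k: "k \<in> M" "k \<noteq> i"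
    and ab: "absorbing S P i" and s: "s \<in> S"
  shows "trans P i s k = 0"
proof -
  have fin: "finite M" using vp by (simp add: valid_protocol_def)
  have nn: "\<forall>j\<in>M. 0 \<le> trans P i s j" and one: "(\<Sum>j\<in>M. trans P i s j) = 1"
    using vp i s by (auto simp: valid_protocol_def)
  have ii: "trans P i s i = 1" using ab s by (simp add: absorbing_def)
  have "(\<Sum>j\<in>M. trans P i s j) = trans P i s i + (\<Sum>j\<in>M-{i}. trans P i s j)"
    by (rule sum.remove[OF fin i])
  also have "(\<Sum>j\<in>M-{i}. trans P i s j) = trans P i s k + (\<Sum>j\<in>M-{i}-{k}. trans P i s j)"
    by (rule sum.remove) (use fin k in auto)
  finally have "trans P i s k + (\<Sum>j\<in>M-{i}-{k}. trans P i s j) = 0" using one ii by simp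
  moreover have "0 \<le> (\<Sum>j\<in>M-{i}-{k}. trans P i s j)" using nn by (auto intro: sum_nonneg)
  moreover have "0 \<le> trans P i s k" using nn k by auto
  ultimately show ?thesis by linarith
qed

locale mset =
  fixes M :: "'m set" and S :: "'s set" and \<pi> :: "theta \<Rightarrow> 's \<Rightarrow> real" and P :: "('m, 's) protocol"
    and k j1 j2 :: 'm and lam :: real
  assumes vs: "valid_signals S \<pi>" and vp: "valid_protocol M S P"
    and kM: "k \<in> M" and j1M: "j1 \<in> M" and j2M: "j2 \<in> M"
    and d1: "j1 \<noteq> k" and d2: "j2 \<noteq> k" and d12: "j1 \<noteq> j2"
    and abk: "absorbing S P k" and ab1: "absorbing S P j1" and ab2: "absorbing S P j2"
    and lam0: "0 \<le> lam" and lam1: "lam \<le> 1"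
    and actk: "act P k = lam * act P j1 + (1 - lam) * act P j2"
begin

abbreviation "c \<equiv> cc j1 j2 lam"
abbreviation "P' \<equiv> mergeP P k j1 j2 lam"
abbreviation "M' \<equiv> M - {k}"

lemma finM: "finite M" using vp by (simp add: valid_protocol_def)

lemma c_nonneg: "0 \<le> c j" using lam0 lam1 by (simp add: cc_def)

lemma sum_c: "(\<Sum>j\<in>M'. c j * f j) = lam * f j1 + (1 - lam) * f j2"
proof -
  have "(\<Sum>j\<in>M'. c j * f j) = (\<Sum>j\<in>M'. (if j = j1 then lam * f j1 else 0) + (if j = j2 then (1 - lam) * f j2 else 0))"
    by (rule sum.cong) (auto simp: cc_def d12)
  also have "\<dots> = lam * f j1 + (1 - lam) * f j2"
    using finM j1M j2M d1 d2 by (simp add: sum.distrib)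
  finally show ?thesis .
qed

lemma sum_c1: "(\<Sum>j\<in>M'. c j) = 1"
  using sum_c[of "\<lambda>_. 1"] by simp

lemma c_nonabs: "\<not> absorbing S P i \<Longrightarrow> c i = 0"
  using ab1 ab2 by (auto simp: cc_def)

lemma abs_iff: assumes i: "i \<in> M'" shows "absorbing S P' i \<longleftrightarrow> absorbing S P i"
proof
  assume a: "absorbing S P' i"
  show "absorbing S P i"
  proof (cases "c i = 0")
    case True then show ?thesis using a by (simp add: absorbing_def mergeP_def)
  next
    case False then show ?thesis using ab1 ab2 by (auto simp: cc_def split: if_splits)
  qed
next
  assume a: "absorbing S P i"
  have "trans P i s k = 0" if "s \<in> S" for s
    using absorbing_out_zero[OF vp _ kM _ a that] i by auto
  then show "absorbing S P' i" using a by (simp add: absorbing_def mergeP_def)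
qed

lemma abs_states: "absorbing_states M' S P' = absorbing_states M S P - {k}"
  using abs_iff by (auto simp: absorbing_states_def)

lemma valid': "valid_protocol M' S P'"
proof -
  have T: "(\<forall>j\<in>M'. 0 \<le> trans P' i s j) \<and> (\<Sum>j\<in>M'. trans P' i s j) = 1" if i: "i \<in> M'" and s: "s \<in> S" for i s
  proof -
    have nn: "\<forall>j\<in>M. 0 \<le> trans P i s j" and one: "(\<Sum>j\<in>M. trans P i s j) = 1"
      using vp i s by (auto simp: valid_protocol_def)
    have "(\<Sum>j\<in>M'. trans P' i s j) = (\<Sum>j\<in>M'. trans P i s j) + (\<Sum>j\<in>M'. c j) * trans P i s k"
      by (simp add: mergeP_def sum.distrib sum_distrib_right)
    also have "\<dots> = (\<Sum>j\<in>M. trans P i s j)"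
      using sum.remove[OF finM kM, of "trans P i s"] sum_c1 by simp
    finally show ?thesis using one nn c_nonneg kM by (auto simp: mergeP_def)
  qed
  have nn: "\<forall>j\<in>M. 0 \<le> init P j" and one: "(\<Sum>j\<in>M. init P j) = 1"
    using vp by (auto simp: valid_protocol_def)
  have I1: "\<forall>j\<in>M'. 0 \<le> init P' j"
    using nn c_nonneg kM by (auto simp: mergeP_def)
  have "(\<Sum>j\<in>M'. init P' j) = (\<Sum>j\<in>M'. init P j) + (\<Sum>j\<in>M'. c j) * init P k"
    by (simp add: mergeP_def sum.distrib sum_distrib_right)
  also have "\<dots> = (\<Sum>j\<in>M. init P j)"
    using sum.remove[OF finM kM, of "init P"] sum_c1 by simp
  finally have I2: "(\<Sum>j\<in>M'. init P' j) = 1" using one by simp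
  have A: "\<forall>i\<in>M'. 0 \<le> act P' i \<and> act P' i \<le> 1" using vp by (auto simp: valid_protocol_def mergeP_def)
  show ?thesis unfolding valid_protocol_def using T I1 I2 A finM by blast
qed

lemma reach': "j \<in> M' \<Longrightarrow> reach M' S \<pi> P' \<sigma> \<theta> t j = reach M S \<pi> P \<sigma> \<theta> t j + c j * reach M S \<pi> P \<sigma> \<theta> t k"
proof (induction t arbitrary: j)
  case 0 then show ?case by (simp add: mergeP_def)
next
  case (Suc t)
  let ?r = "reach M S \<pi> P \<sigma> \<theta> t"
  define A where "A i = (if absorbing S P i then 0 else ?r i * (1 - \<sigma> i \<theta>))" for i
  have "reach M' S \<pi> P' \<sigma> \<theta> (Suc t) j =
     (\<Sum>i\<in>M'. A i * ((\<Sum>s\<in>S. \<pi> \<theta> s * trans P i s j) + c j * (\<Sum>s\<in>S. \<pi> \<theta> s * trans P i s k)))"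
    unfolding reach.simps
  proof (rule sum.cong)
    fix i assume i: "i \<in> M'"
    have "(\<Sum>s\<in>S. \<pi> \<theta> s * trans P' i s j) = (\<Sum>s\<in>S. \<pi> \<theta> s * trans P i s j) + c j * (\<Sum>s\<in>S. \<pi> \<theta> s * trans P i s k)"
      by (simp add: mergeP_def algebra_simps sum.distrib sum_distrib_left)
    moreover have "\<not> absorbing S P i \<Longrightarrow> reach M' S \<pi> P' \<sigma> \<theta> t i = ?r i"
      using Suc.IH[OF i] c_nonabs by simp
    ultimately show "(if absorbing S P' i then 0
          else reach M' S \<pi> P' \<sigma> \<theta> t i * (1 - \<sigma> i \<theta>) * (\<Sum>s\<in>S. \<pi> \<theta> s * trans P' i s j)) =
        A i * ((\<Sum>s\<in>S. \<pi> \<theta> s * trans P i s j) + c j * (\<Sum>s\<in>S. \<pi> \<theta> s * trans P i s k))"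
      using abs_iff[OF i] by (simp add: A_def)
  qed simp
  also have "\<dots> = (\<Sum>i\<in>M'. A i * (\<Sum>s\<in>S. \<pi> \<theta> s * trans P i s j)) + c j * (\<Sum>i\<in>M'. A i * (\<Sum>s\<in>S. \<pi> \<theta> s * trans P i s k))"
    by (simp add: algebra_simps sum.distrib sum_distrib_left)
  also have "(\<Sum>i\<in>M'. A i * (\<Sum>s\<in>S. \<pi> \<theta> s * trans P i s j)) = (\<Sum>i\<in>M. A i * (\<Sum>s\<in>S. \<pi> \<theta> s * trans P i s j))"
    using sum.remove[OF finM kM, of "\<lambda>i. A i * (\<Sum>s\<in>S. \<pi> \<theta> s * trans P i s j)"] abk by (simp add: A_def)
  also have "(\<Sum>i\<in>M'. A i * (\<Sum>s\<in>S. \<pi> \<theta> s * trans P i s k)) = (\<Sum>i\<in>M. A i * (\<Sum>s\<in>S. \<pi> \<theta> s * trans P i s k))"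
    using sum.remove[OF finM kM, of "\<lambda>i. A i * (\<Sum>s\<in>S. \<pi> \<theta> s * trans P i s k)"] abk by (simp add: A_def)
  finally have eq: "reach M' S \<pi> P' \<sigma> \<theta> (Suc t) j = (\<Sum>i\<in>M. A i * (\<Sum>s\<in>S. \<pi> \<theta> s * trans P i s j)) + c j * (\<Sum>i\<in>M. A i * (\<Sum>s\<in>S. \<pi> \<theta> s * trans P i s k))" .
  have "reach M S \<pi> P \<sigma> \<theta> (Suc t) x = (\<Sum>i\<in>M. A i * (\<Sum>s\<in>S. \<pi> \<theta> s * trans P i s x))" for x
    unfolding reach.simps A_def by (rule sum.cong) auto
  then show ?case using eq by simp
qed

lemma end_prob':
  assumes sg: "\<And>i. i \<in> M \<Longrightarrow> \<not> absorbing S P i \<Longrightarrow> 0 \<le> \<sigma> i \<theta> \<and> \<sigma> i \<theta> \<le> 1"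
    and j: "j \<in> M'"
  shows "end_prob M' S \<pi> P' \<sigma> \<theta> j = end_prob M S \<pi> P \<sigma> \<theta> j + c j * end_prob M S \<pi> P \<sigma> \<theta> k"
proof (cases "c j = 0")
  case True then show ?thesis unfolding end_prob_def using reach'[OF j] abs_iff[OF j] by simp
next
  case False
  then have abj: "absorbing S P j" using c_nonabs by blast
  have sj: "summable (\<lambda>t. reach M S \<pi> P \<sigma> \<theta> t j)"
    using reach_summable[OF vs vp, of \<sigma> \<theta> j] sg j abj by blast
  have sk: "summable (\<lambda>t. reach M S \<pi> P \<sigma> \<theta> t k)"
    using reach_summable[OF vs vp, of \<sigma> \<theta> k] sg kM abk by blast
  have "end_prob M' S \<pi> P' \<sigma> \<theta> j = (\<Sum>t. reach M S \<pi> P \<sigma> \<theta> t j + c j * reach M S \<pi> P \<sigma> \<theta> t k)"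
    unfolding end_prob_def using reach'[OF j] abs_iff[OF j] abj by simp
  also have "\<dots> = (\<Sum>t. reach M S \<pi> P \<sigma> \<theta> t j) + c j * (\<Sum>t. reach M S \<pi> P \<sigma> \<theta> t k)"
    using suminf_add[OF sj summable_mult[OF sk, of "c j"]] suminf_mult[OF sk, of "c j"] by simp
  finally show ?thesis unfolding end_prob_def using abj abk by simp
qed

lemma act': "act P' = act P" by (simp add: mergeP_def)

lemma sums_eq:
  assumes sg: "\<And>i. i \<in> M \<Longrightarrow> \<not> absorbing S P i \<Longrightarrow> 0 \<le> \<sigma> i \<theta> \<and> \<sigma> i \<theta> \<le> 1"
  shows "(\<Sum>j\<in>M'. end_prob M' S \<pi> P' \<sigma> \<theta> j * act P' j) = (\<Sum>j\<in>M. end_prob M S \<pi> P \<sigma> \<theta> j * act P j)"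
    and "(\<Sum>j\<in>M'. end_prob M' S \<pi> P' \<sigma> \<theta> j * (1 - act P' j)) = (\<Sum>j\<in>M. end_prob M S \<pi> P \<sigma> \<theta> j * (1 - act P j))"
proof -
  let ?e = "end_prob M S \<pi> P \<sigma> \<theta>"
  have "(\<Sum>j\<in>M'. end_prob M' S \<pi> P' \<sigma> \<theta> j * act P' j) = (\<Sum>j\<in>M'. ?e j * act P j + ?e k * (c j * act P j))"
    by (rule sum.cong) (auto simp: end_prob'[of \<sigma> \<theta>, OF sg] act' algebra_simps)
  also have "\<dots> = (\<Sum>j\<in>M'. ?e j * act P j) + ?e k * act P k"
    by (simp add: sum.distrib sum_distrib_left[symmetric] sum_c actk)
  also have "\<dots> = (\<Sum>j\<in>M. ?e j * act P j)"
    using sum.remove[OF finM kM, of "\<lambda>j. ?e j * act P j"] by simp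
  finally show "(\<Sum>j\<in>M'. end_prob M' S \<pi> P' \<sigma> \<theta> j * act P' j) = (\<Sum>j\<in>M. ?e j * act P j)" .
  have "(\<Sum>j\<in>M'. end_prob M' S \<pi> P' \<sigma> \<theta> j * (1 - act P' j)) = (\<Sum>j\<in>M'. ?e j * (1 - act P j) + ?e k * (c j * (1 - act P j)))"
    by (rule sum.cong) (auto simp: end_prob'[of \<sigma> \<theta>, OF sg] act' algebra_simps)
  also have "\<dots> = (\<Sum>j\<in>M'. ?e j * (1 - act P j)) + ?e k * (1 - act P k)"
  proof -
    have cs: "(\<Sum>j\<in>M'. c j * (1 - act P j)) = 1 - act P k"
      using sum_c[of "\<lambda>j. 1 - act P j"] actk by (simp add: algebra_simps)
    show ?thesis by (simp only: sum.distrib sum_distrib_left[symmetric] cs)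
  qed
  also have "\<dots> = (\<Sum>j\<in>M. ?e j * (1 - act P j))"
    using sum.remove[OF finM kM, of "\<lambda>j. ?e j * (1 - act P j)"] by simp
  finally show "(\<Sum>j\<in>M'. end_prob M' S \<pi> P' \<sigma> \<theta> j * (1 - act P' j)) = (\<Sum>j\<in>M. ?e j * (1 - act P j))" .
qed

lemma US_eq:
  assumes sg: "\<And>i \<theta>. i \<in> M \<Longrightarrow> \<not> absorbing S P i \<Longrightarrow> 0 \<le> \<sigma> i \<theta> \<and> \<sigma> i \<theta> \<le> 1"
  shows "US M' S \<pi> p P' \<sigma> = US M S \<pi> p P \<sigma>" "UR M' S \<pi> p P' \<sigma> = UR M S \<pi> p P \<sigma>"
  unfolding US_def UR_def using sums_eq[of \<sigma>] sg by simp_all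

end

lemma three_sorted:
  fixes f :: "'a \<Rightarrow> real"
  assumes "x \<noteq> y" "y \<noteq> z" "x \<noteq> z"
  shows "\<exists>j1 k j2. {j1, k, j2} = {x, y, z} \<and> j1 \<noteq> k \<and> j2 \<noteq> k \<and> j1 \<noteq> j2 \<and> f j1 \<le> f k \<and> f k \<le> f j2"
proof -
  have "f x \<le> f y \<and> f y \<le> f z \<or> f x \<le> f z \<and> f z \<le> f y \<or> f y \<le> f x \<and> f x \<le> f z \<or>
        f y \<le> f z \<and> f z \<le> f x \<or> f z \<le> f x \<and> f x \<le> f y \<or> f z \<le> f y \<and> f y \<le> f x" by linarith
  then show ?thesis using assms by (elim disjE) (metis insert_commute)+
qed

theorem mainTheorem20:
  fixes M :: "'m set" and S :: "'s set" and \<pi> :: "theta \<Rightarrow> 's \<Rightarrow> real" and p :: real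
    and P :: "('m, 's) protocol" and \<sigma> :: "'m \<Rightarrow> theta \<Rightarrow> real"
  assumes "valid_signals S \<pi>"
    and "0 < p" and "p < 1"
    and "valid_protocol M S P"
    and "card (absorbing_states M S P) > 2"
    and "best_response M S \<pi> p P \<sigma>"
  shows "\<exists>M' P'. M' \<subset> M \<and> card M' = card M - 1 \<and> valid_protocol M' S P' \<and>
           card (absorbing_states M' S P') = card (absorbing_states M S P) - 1 \<and>
           UR M S \<pi> p P \<sigma> = UR M' S \<pi> p P' \<sigma> \<and>
           best_response M' S \<pi> p P' \<sigma>"
proof -
  note vs = assms(1) and vp = assms(4) and br = assms(6)
  have finM: "finite M" using vp by (simp add: valid_protocol_def)
  let ?A = "absorbing_states M S P"
  have finA: "finite ?A" using finM by (simp add: absorbing_states_def)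
  obtain T where T: "T \<subseteq> ?A" "card T = 3"
    using obtain_subset_with_card_n[of 3 ?A] assms(5) by auto
  then obtain x y z where xyz: "T = {x, y, z}" "x \<noteq> y" "y \<noteq> z" "x \<noteq> z"
    by (auto simp: card_3_iff)
  obtain j1 k j2 where jk: "{j1, k, j2} = {x, y, z}" "j1 \<noteq> k" "j2 \<noteq> k" "j1 \<noteq> j2"
    "act P j1 \<le> act P k" "act P k \<le> act P j2"
    using three_sorted[OF xyz(2-4), of "act P"] by blast
  have inA: "j1 \<in> ?A" "k \<in> ?A" "j2 \<in> ?A" using T xyz jk(1) by blast+
  define lam where "lam = (if act P j1 = act P j2 then 1 else (act P j2 - act P k) / (act P j2 - act P j1))"
  have lam: "0 \<le> lam" "lam \<le> 1" "act P k = lam * act P j1 + (1 - lam) * act P j2"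
  proof -
    show "0 \<le> lam" "lam \<le> 1" using jk(5,6) by (auto simp: lam_def divide_simps)
    show "act P k = lam * act P j1 + (1 - lam) * act P j2"
    proof (cases "act P j1 = act P j2")
      case True then show ?thesis using jk(5,6) by (simp add: lam_def)
    next
      case False
      then have "act P j2 - act P j1 \<noteq> 0" by simp
      then have e: "lam * (act P j2 - act P j1) = act P j2 - act P k" using False by (simp add: lam_def)
      have e2: "lam * act P j2 - lam * act P j1 = act P j2 - act P k" using e by (simp add: right_diff_distrib)
      have "(1 - lam) * act P j2 = act P j2 - lam * act P j2" by (simp add: left_diff_distrib)
      then show ?thesis using e2 by linarith
    qed
  qed
  interpret mset M S \<pi> P k j1 j2 lam
    using vs vp inA jk lam by unfold_locales (auto simp: absorbing_states_def)
  have stM: "strategy M \<sigma>" using br by (simp add: best_response_def)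
  have UReq: "UR M' S \<pi> p P' \<sigma> = UR M S \<pi> p P \<sigma>"
    using US_eq(2)[of \<sigma> p] stM by (auto simp: strategy_def)
  have BR: "best_response M' S \<pi> p P' \<sigma>"
    unfolding best_response_def
  proof (intro conjI allI impI)
    show "strategy M' \<sigma>" using stM by (auto simp: strategy_def)
    fix \<sigma>' assume st': "strategy M' \<sigma>'"
    define \<sigma>'' where "\<sigma>'' i \<theta> = (if i = k then 0 else \<sigma>' i \<theta>)" for i \<theta>
    have sg': "0 \<le> \<sigma>' i \<theta> \<and> \<sigma>' i \<theta> \<le> 1" if "i \<in> M" "\<not> absorbing S P i" for i \<theta>
      using st' that abk by (auto simp: strategy_def)
    have "US M' S \<pi> p P' \<sigma>' = US M S \<pi> p P \<sigma>'" using US_eq(1)[of \<sigma>' p] sg' by blast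
    also have "\<dots> = US M S \<pi> p P \<sigma>''"
      by (rule US_cong) (use abk in \<open>auto simp: \<sigma>''_def\<close>)
    also have "\<dots> \<le> US M S \<pi> p P \<sigma>"
      using br st' unfolding best_response_def strategy_def \<sigma>''_def by auto
    also have "\<dots> = US M' S \<pi> p P' \<sigma>" using US_eq(1)[of \<sigma> p] stM by (auto simp: strategy_def)
    finally show "US M' S \<pi> p P' \<sigma>' \<le> US M' S \<pi> p P' \<sigma>" .
  qed
  have "card (absorbing_states M' S P') = card ?A - 1"
    unfolding abs_states using inA(2) finA by simp
  moreover have "M' \<subset> M" "card M' = card M - 1" using kM finM by auto
  ultimately show ?thesis using valid' UReq BR by metis
qed

end
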